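(* Let $l:\mathbb{R}^p\to\mathbb{R}$ be a convex and differentiable function, let $\lambda_1\ge\lambda_2\ge\dots\ge\lambda_p\ge 0$ be arbitrary, and let $$\hat b\in\operatorname{argmin}_{b\in\mathbb{R}^p}\Big\{l(b)+\sum_{i=1}^p\lambda_i|b|_{(i)}\Big\}.$$ Let $U(b)=-\nabla l(b)$ and for $a>0$ let $T(a)=U(\hat b)+a\hat b$. Assume $R:=\#\{i:\hat b_i\neq 0\}=r$. Then for any $a>0$ and every $i$: (1) $\hat b_i\neq 0 \iff |T_i(a)|>\lambda_r$; (2) $\hat b_i\neq 0 \implies |U_i(\hat b)|\ge\lambda_r$. Moreover, if $\lambda_1>\lambda_2>\dots>\lambda_p\ge 0$, then $|U_i(\hat b)|\ge\lambda_r\implies\hat b_i\neq 0$.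
   Context: $|b|_{(1)}\ge\dots\ge|b|_{(p)}$ denote the ordered absolute values of the entries of $b\in\mathbb{R}^p$. *)

theory Defs
  imports "HOL-Analysis.Analysis" "HOL-Library.Multiset"
begin

text \<open>Ordered absolute values |b|_(1) >= ... >= |b|_(p) of a vector b in R^p
  (p = CARD('n)), indexed from 1: ord_abs b k = |b|_(k) for 1 <= k <= p.\<close>
definition ord_abs :: "real ^ 'n::finite \<Rightarrow> nat \<Rightarrow> real" where
  "ord_abs b k = rev (sorted_list_of_multiset (image_mset (\<lambda>i. \<bar>b $ i\<bar>) (mset_set UNIV))) ! (k - 1)"

definition slope_pen :: "(nat \<Rightarrow> real) \<Rightarrow> real ^ 'n::finite \<Rightarrow> real" where
  "slope_pen lam b = (\<Sum>k = 1..CARD('n). lam k * ord_abs b k)"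

end

theory Submission
  imports Defs
begin

lemma ord_abs_repr:
  fixes b :: "real ^ 'n::finite"
  obtains ys where "distinct ys" "set ys = UNIV" "length ys = CARD('n)"
    "\<And>k. k < CARD('n) \<Longrightarrow> ord_abs b (Suc k) = \<bar>b $ (ys ! k)\<bar>"
    "sorted_wrt (\<ge>) (map (\<lambda>i. \<bar>b $ i\<bar>) ys)"
proof -
  define f where "f = (\<lambda>i. \<bar>b $ i\<bar>)"
  obtain L where L: "set L = (UNIV :: 'n set)" "distinct L" using finite_distinct_list[of "UNIV :: 'n set"] by auto
  have mL: "mset_set UNIV = mset L" using L mset_set_set by metis
  have s: "sort (map f L) = map f (sort_key f L)"
    by (rule properties_for_sort) (simp_all add: mset_map)
  define ys where "ys = rev (sort_key f L)"
  have oa: "ord_abs b k = map f ys ! (k - 1)" for k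
  proof -
    have "image_mset f (mset_set UNIV) = mset (map f L)" by (simp add: mL)
    then have "sorted_list_of_multiset (image_mset f (mset_set UNIV)) = map f (sort_key f L)"
      using s by (metis sorted_list_of_multiset_mset)
    then show ?thesis unfolding ord_abs_def ys_def f_def[symmetric] by (simp only: rev_map)
  qed
  have len: "length ys = CARD('n)" unfolding ys_def using L distinct_card by fastforce
  show ?thesis
  proof
    show "distinct ys" unfolding ys_def using L by simp
    show "set ys = UNIV" unfolding ys_def using L by simp
    show "length ys = CARD('n)" by (fact len)
    show "ord_abs b (Suc k) = \<bar>b $ (ys ! k)\<bar>" if "k < CARD('n)" for k
      using that len by (simp add: oa f_def)
    have so: "sorted (map f (sort_key f L))" by simp
    show "sorted_wrt (\<ge>) (map (\<lambda>i. \<bar>b $ i\<bar>) ys)"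
      unfolding ys_def f_def[symmetric] rev_map[symmetric] sorted_wrt_rev
      using so by simp
  qed
qed

lemma dec_subset_sum:
  fixes x :: "nat \<Rightarrow> real"
  assumes dec: "\<And>i j. i \<le> j \<Longrightarrow> j < p \<Longrightarrow> x j \<le> x i"
    and P: "P \<subseteq> {..<p}" and cP: "card P = k"
  shows "sum x P \<le> sum x {..<k}"
proof (cases "k = 0")
  case True
  then have "P = {}" using cP P finite_subset by fastforce
  then show ?thesis using True by simp
next
  case False
  have fP: "finite P" using P finite_subset by blast
  have kp: "k \<le> p" using card_mono[OF _ P] cP by simp
  define K where "K = {..<k}"
  define c where "c = x (k - 1)"
  have e1: "sum x P = sum x (P \<inter> K) + sum x (P - K)" using fP by (rule sum.Int_Diff)
  have e2: "sum x K = sum x (K \<inter> P) + sum x (K - P)" unfolding K_def by (rule sum.Int_Diff) simp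
  have cc: "card (P - K) = card (K - P)"
    using card_Int_Diff[OF fP, of K] card_Int_Diff[of K P] cP by (simp add: K_def Int_commute)
  have b1: "sum x (P - K) \<le> of_nat (card (P - K)) * c"
    by (rule sum_bounded_above) (use P False in \<open>auto simp: K_def c_def intro!: dec\<close>)
  have b2: "of_nat (card (K - P)) * c \<le> sum x (K - P)"
    by (rule sum_bounded_below) (use kp False in \<open>auto simp: K_def c_def intro!: dec\<close>)
  have b1': "sum x (P - K) \<le> of_nat (card (K - P)) * c" using b1 cc by simp
  show ?thesis using e1 e2 b1' b2 unfolding K_def by (simp add: Int_commute)
qed

definition topsum :: "real ^ 'n::finite \<Rightarrow> nat \<Rightarrow> real" where
  "topsum b k = (\<Sum>j = 1..k. ord_abs b j)"

lemma sum_1_to_lessThan: "(\<Sum>j = 1..k. f j) = (\<Sum>j<k. f (Suc j))"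
  by (induction k) simp_all

lemma topsum_facts:
  fixes b :: "real ^ 'n::finite"
  shows "card A = k \<Longrightarrow> (\<Sum>i\<in>A. \<bar>b $ i\<bar>) \<le> topsum b k"
    and "k \<le> CARD('n) \<Longrightarrow> \<exists>A. card A = k \<and> topsum b k = (\<Sum>i\<in>A. \<bar>b $ i\<bar>)"
    and "1 \<le> k \<Longrightarrow> k \<le> CARD('n) \<Longrightarrow> ord_abs b k \<ge> 0"
proof -
  obtain ys where ys: "distinct ys" "set ys = UNIV" "length ys = CARD('n)"
    "\<And>k. k < CARD('n) \<Longrightarrow> ord_abs b (Suc k) = \<bar>b $ (ys ! k)\<bar>"
    "sorted_wrt (\<ge>) (map (\<lambda>i. \<bar>b $ i\<bar>) ys)"
    using ord_abs_repr by blast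
  define p where "p = CARD('n)"
  define x where "x = (\<lambda>j. \<bar>b $ (ys ! j)\<bar>)"
  have dec: "x j \<le> x i" if "i \<le> j" "j < p" for i j
  proof (cases "i = j")
    case False
    then show ?thesis using ys(5) that ys(3) unfolding x_def p_def sorted_wrt_iff_nth_less by auto
  qed simp
  have inj: "inj_on (nth ys) {..<p}" using ys(1,3) by (simp add: inj_on_nth p_def)
  have ts: "topsum b k = sum x {..<k}" if "k \<le> p" for k
    unfolding topsum_def sum_1_to_lessThan using that ys(4) by (auto simp: x_def p_def intro!: sum.cong)
  {
    assume cA: "card A = k"
    define P where "P = {j. j < p \<and> ys ! j \<in> A}"
    have AP: "A = nth ys ` P" unfolding P_def using ys(2,3) by (auto simp: p_def image_iff) (metis UNIV_I in_set_conv_nth)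
    have injP: "inj_on (nth ys) P" using inj by (rule inj_on_subset) (auto simp: P_def)
    have cP: "card P = k" using cA AP card_image[OF injP] by simp
    have Pp: "P \<subseteq> {..<p}" by (auto simp: P_def)
    have kp: "k \<le> p" using cP card_mono[OF _ Pp] by simp
    have "(\<Sum>i\<in>A. \<bar>b $ i\<bar>) = sum x P" unfolding AP by (simp add: sum.reindex[OF injP] x_def)
    also have "\<dots> \<le> sum x {..<k}" by (rule dec_subset_sum[OF dec Pp cP])
    also have "\<dots> = topsum b k" using ts kp by simp
    finally show "(\<Sum>i\<in>A. \<bar>b $ i\<bar>) \<le> topsum b k" .
  }
  {
    assume kp: "k \<le> CARD('n)"
    have injk: "inj_on (nth ys) {..<k}" using inj by (rule inj_on_subset) (use kp in \<open>auto simp: p_def\<close>)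
    show "\<exists>A. card A = k \<and> topsum b k = (\<Sum>i\<in>A. \<bar>b $ i\<bar>)"
      by (rule exI[of _ "nth ys ` {..<k}"]) (use kp injk ts in \<open>simp add: card_image sum.reindex x_def p_def\<close>)
  }
  {
    assume "1 \<le> k" "k \<le> CARD('n)"
    then show "ord_abs b k \<ge> 0" using ys(4)[of "k - 1"] by simp
  }
qed

lemma abel_sum:
  fixes lam w :: "nat \<Rightarrow> real"
  shows "(\<Sum>k=1..n. lam k * w k) = (\<Sum>k=1..n. (lam k - lam (Suc k)) * (\<Sum>j=1..k. w j)) + lam (Suc n) * (\<Sum>j=1..n. w j)"
  by (induction n) (simp_all add: algebra_simps)

definition lamx :: "(nat \<Rightarrow> real) \<Rightarrow> nat \<Rightarrow> nat \<Rightarrow> real" where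
  "lamx lam p k = (if k \<le> p then lam k else 0)"

definition dd :: "(nat \<Rightarrow> real) \<Rightarrow> nat \<Rightarrow> nat \<Rightarrow> real" where
  "dd lam p k = lamx lam p k - lamx lam p (Suc k)"

lemma pen_repr:
  fixes b :: "real ^ 'n::finite"
  shows "slope_pen lam b = (\<Sum>k=1..CARD('n). dd lam CARD('n) k * topsum b k)"
proof -
  have "slope_pen lam b = (\<Sum>k=1..CARD('n). lamx lam CARD('n) k * ord_abs b k)"
    unfolding slope_pen_def by (rule sum.cong) (auto simp: lamx_def)
  also have "\<dots> = (\<Sum>k=1..CARD('n). dd lam CARD('n) k * topsum b k)"
    unfolding abel_sum[of "lamx lam CARD('n)"] by (simp add: lamx_def dd_def topsum_def)
  finally show ?thesis .
qed

lemma dd_tele: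
  assumes "m \<le> p"
  shows "(\<Sum>k=m..p. dd lam p k) = lam m"
proof -
  have "(\<Sum>k=m..p. dd lam p k) = - (\<Sum>k=m..p. lamx lam p (Suc k) - lamx lam p k)"
    unfolding dd_def by (simp add: sum_negf[symmetric])
  also have "\<dots> = lamx lam p m - lamx lam p (Suc p)"
    using assms by (subst sum_Suc_diff) simp_all
  also have "\<dots> = lam m" using assms by (simp add: lamx_def)
  finally show ?thesis .
qed

lemma dd_nonneg:
  assumes lam_mono: "\<And>i j. 1 \<le> i \<Longrightarrow> i \<le> j \<Longrightarrow> j \<le> p \<Longrightarrow> lam j \<le> lam i"
    and lam_nonneg: "lam p \<ge> 0" and "1 \<le> k"
  shows "dd lam p k \<ge> 0"
proof -
  have "k \<le> p \<Longrightarrow> lam p \<le> lam k" using lam_mono[of k p] assms(3) by simp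
  moreover have "Suc k \<le> p \<Longrightarrow> lam (Suc k) \<le> lam k" using lam_mono[of k "Suc k"] assms(3) by simp
  ultimately show ?thesis using lam_nonneg by (auto simp: dd_def lamx_def)
qed

lemma split_ivl: "r \<le> p \<Longrightarrow> (\<Sum>k=1..p. f k) = (\<Sum>k=1..r. f k) + (\<Sum>k=Suc r..p. (f k :: real))"
  by (induction p) (auto simp: le_Suc_eq)

lemma deriv_lemma:
  fixes \<phi> :: "real \<Rightarrow> real"
  assumes der: "(\<phi> has_real_derivative D) (at 0)" and t0: "t0 > 0"
    and le: "\<And>t. 0 < t \<Longrightarrow> t < t0 \<Longrightarrow> \<phi> 0 \<le> \<phi> t + c * t"
  shows "0 \<le> D + c"
proof (rule ccontr)
  assume "\<not> 0 \<le> D + c"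
  then have e: "D + c < 0" by simp
  have "((\<lambda>y. (\<phi> y - \<phi> 0) / (y - 0)) \<longlongrightarrow> D) (at 0)"
    using der unfolding has_field_derivative_iff .
  then have "eventually (\<lambda>y. (\<phi> y - \<phi> 0) / (y - 0) < -c) (at 0)"
    using e by (intro order_tendstoD(2)) auto
  then obtain d where d: "d > 0" "\<And>y. y \<noteq> 0 \<Longrightarrow> dist y 0 < d \<Longrightarrow> (\<phi> y - \<phi> 0) / y < -c"
    unfolding eventually_at by auto
  define y where "y = min d t0 / 2"
  have y: "y > 0" "y < t0" "dist y 0 < d" using d t0 by (auto simp: y_def dist_real_def)
  have "(\<phi> y - \<phi> 0) / y < -c" using d(2)[OF _ y(3)] y by simp
  then have "\<phi> y - \<phi> 0 < -c * y" using y by (simp add: divide_less_eq)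
  with le[OF y(1,2)] show False by (simp add: algebra_simps)
qed

lemma phi_deriv:
  fixes l :: "real ^ 'n::finite \<Rightarrow> real"
  assumes grad: "\<And>b. (l has_derivative (\<lambda>h. g b \<bullet> h)) (at b)"
  shows "((\<lambda>t. l (bhat + t *\<^sub>R h)) has_real_derivative (g bhat \<bullet> h)) (at 0)"
proof -
  have d1: "((\<lambda>t::real. bhat + t *\<^sub>R h) has_derivative (\<lambda>t. t *\<^sub>R h)) (at 0)"
    by (auto intro!: derivative_eq_intros)
  have d2: "(l has_derivative (\<lambda>v. g bhat \<bullet> v)) (at ((\<lambda>t::real. bhat + t *\<^sub>R h) 0))"
    using grad[of bhat] by simp
  have "((\<lambda>t. l (bhat + t *\<^sub>R h)) has_derivative (\<lambda>t. g bhat \<bullet> (t *\<^sub>R h))) (at 0)"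
    using has_derivative_compose[OF d1 d2] by simp
  moreover have "(\<lambda>t. g bhat \<bullet> (t *\<^sub>R h)) = (*) (g bhat \<bullet> h)" by (auto simp: algebra_simps)
  ultimately show ?thesis unfolding has_field_derivative_def by simp
qed

lemma comp_upd:
  fixes bhat :: "real ^ 'n::finite"
  shows "(bhat + t *\<^sub>R (c *\<^sub>R axis i 1)) $ j = bhat $ j + (if j = i then t * c else 0)"
  by (simp add: axis_def)

lemma topsum_split_ge:
  fixes b :: "real ^ 'n::finite"
  assumes "r \<le> k" "k \<le> CARD('n)"
  shows "topsum b r \<le> topsum b k"
proof -
  have "topsum b k = topsum b r + (\<Sum>j=Suc r..k. ord_abs b j)"
    unfolding topsum_def using split_ivl[OF assms(1)] .
  moreover have "(\<Sum>j=Suc r..k. ord_abs b j) \<ge> 0"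
    using assms by (intro sum_nonneg topsum_facts(3)) auto
  ultimately show ?thesis by simp
qed

lemma claimB:
  fixes l :: "real ^ 'n::finite \<Rightarrow> real"
    and g :: "real ^ 'n \<Rightarrow> real ^ 'n"
    and lam :: "nat \<Rightarrow> real"
    and bhat :: "real ^ 'n"
    and r :: nat
  assumes grad: "\<And>b. (l has_derivative (\<lambda>h. g b \<bullet> h)) (at b)"
    and lam_mono: "\<And>i j. 1 \<le> i \<Longrightarrow> i \<le> j \<Longrightarrow> j \<le> CARD('n) \<Longrightarrow> lam j \<le> lam i"
    and lam_nonneg: "lam (CARD('n)) \<ge> 0"
    and argmin: "\<And>b. l bhat + slope_pen lam bhat \<le> l b + slope_pen lam b"
    and R: "card {i. bhat $ i \<noteq> 0} = r"
    and r_pos: "r \<ge> 1"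
    and nz: "bhat $ i \<noteq> 0"
  shows "sgn (bhat $ i) * (- (g bhat $ i)) \<ge> lam r"
proof -
  define p where "p = CARD('n)"
  define S where "S = {i. bhat $ i \<noteq> 0}"
  define s where "s = sgn (bhat $ i)"
  define \<tau> where "\<tau> = \<bar>bhat $ i\<bar>"
  define h where "h = (- s) *\<^sub>R axis i (1::real)"
  have rp: "r \<le> p" unfolding p_def using R card_mono[of UNIV "{i. bhat $ i \<noteq> 0}"] by simp
  have tau: "\<tau> > 0" using nz by (simp add: \<tau>_def)
  have sabs: "s * bhat $ i = \<tau>" by (simp add: s_def \<tau>_def sgn_if)
  have s2: "s * s = 1" using nz by (simp add: s_def sgn_if)
  have key: "l bhat \<le> l (bhat + t *\<^sub>R h) + (- lam r) * t" if t: "0 < t" "t < \<tau>" for t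
  proof -
    define b where "b = bhat + t *\<^sub>R h"
    have bj: "b $ j = bhat $ j" if "j \<noteq> i" for j using that by (simp add: b_def h_def axis_def)
    have bi: "\<bar>b $ i\<bar> = \<tau> - t"
    proof -
      have "b $ i = bhat $ i - t * s" by (simp add: b_def h_def axis_def)
      also have "\<dots> = s * (\<tau> - t)" proof -
        have "bhat $ i = s * \<tau>" by (simp add: s_def \<tau>_def sgn_if)
        then show ?thesis by (simp add: algebra_simps)
      qed
      finally show ?thesis using t nz by (simp add: abs_mult s_def abs_sgn_eq)
    qed
    have ble: "\<bar>b $ j\<bar> \<le> \<bar>bhat $ j\<bar>" for j
      using bj bi t by (cases "j = i") (auto simp: \<tau>_def)
    have ta: "topsum b k \<le> topsum bhat k" if kp: "k \<le> p" for k
    proof -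
      obtain A where A: "card A = k" "topsum b k = (\<Sum>j\<in>A. \<bar>b $ j\<bar>)"
        using topsum_facts(2)[of k b] kp by (auto simp: p_def)
      have "(\<Sum>j\<in>A. \<bar>b $ j\<bar>) \<le> (\<Sum>j\<in>A. \<bar>bhat $ j\<bar>)" by (rule sum_mono) (rule ble)
      also have "\<dots> \<le> topsum bhat k" by (rule topsum_facts(1)[OF A(1)])
      finally show ?thesis using A by simp
    qed
    have sumb: "(\<Sum>j\<in>UNIV. \<bar>b $ j\<bar>) = (\<Sum>j\<in>UNIV. \<bar>bhat $ j\<bar>) - t"
    proof -
      have "(\<Sum>j\<in>UNIV. \<bar>b $ j\<bar>) = \<bar>b $ i\<bar> + (\<Sum>j\<in>UNIV - {i}. \<bar>b $ j\<bar>)"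
        by (simp add: sum.remove)
      also have "(\<Sum>j\<in>UNIV - {i}. \<bar>b $ j\<bar>) = (\<Sum>j\<in>UNIV - {i}. \<bar>bhat $ j\<bar>)"
        using bj by (intro sum.cong) auto
      also have "(\<Sum>j\<in>UNIV. \<bar>bhat $ j\<bar>) = \<bar>bhat $ i\<bar> + (\<Sum>j\<in>UNIV - {i}. \<bar>bhat $ j\<bar>)"
        by (simp add: sum.remove)
      ultimately show ?thesis using bi by (simp add: \<tau>_def)
    qed
    have topr: "topsum bhat r \<ge> (\<Sum>j\<in>UNIV. \<bar>bhat $ j\<bar>)"
    proof -
      have "(\<Sum>j\<in>UNIV. \<bar>bhat $ j\<bar>) = (\<Sum>j\<in>S. \<bar>bhat $ j\<bar>)"
        by (rule sum.mono_neutral_right) (auto simp: S_def)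
      also have "\<dots> \<le> topsum bhat r" using topsum_facts(1)[of S r bhat] R by (simp add: S_def)
      finally show ?thesis .
    qed
    have tb: "topsum b k \<le> topsum bhat k - t" if rk: "r \<le> k" and kp: "k \<le> p" for k
    proof -
      obtain A where A: "card A = k" "topsum b k = (\<Sum>j\<in>A. \<bar>b $ j\<bar>)"
        using topsum_facts(2)[of k b] kp by (auto simp: p_def)
      have "(\<Sum>j\<in>A. \<bar>b $ j\<bar>) \<le> (\<Sum>j\<in>UNIV. \<bar>b $ j\<bar>)" by (rule sum_mono2) auto
      moreover have "topsum bhat r \<le> topsum bhat k" using topsum_split_ge rk kp by (simp add: p_def)
      ultimately show ?thesis using A sumb topr by linarith
    qed
    have dn: "dd lam p k \<ge> 0" if "1 \<le> k" for k
      using dd_nonneg[of p lam k] lam_mono lam_nonneg that by (simp add: p_def)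
    have "slope_pen lam bhat - slope_pen lam b = (\<Sum>k=1..p. dd lam p k * (topsum bhat k - topsum b k))"
      unfolding pen_repr p_def by (simp add: sum_subtractf[symmetric] algebra_simps)
    also have "\<dots> \<ge> (\<Sum>k=1..p. dd lam p k * (if r \<le> k then t else 0))"
      using ta tb dn by (intro sum_mono mult_left_mono) (auto simp: algebra_simps)
    moreover have "(\<Sum>k=1..p. dd lam p k * (if r \<le> k then t else 0)) = (\<Sum>k=r..p. dd lam p k) * t"
    proof -
      have "(\<Sum>k=1..p. dd lam p k * (if r \<le> k then t else 0)) = (\<Sum>k=1..r-1. dd lam p k * (if r \<le> k then t else 0)) + (\<Sum>k=Suc (r-1)..p. dd lam p k * (if r \<le> k then t else 0))"
        using rp by (intro split_ivl) simp
      also have "(\<Sum>k=1..r-1. dd lam p k * (if r \<le> k then t else 0)) = 0"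
        by (intro sum.neutral) auto
      also have "(\<Sum>k=Suc (r-1)..p. dd lam p k * (if r \<le> k then t else 0)) = (\<Sum>k=r..p. dd lam p k * t)"
        using r_pos by (intro sum.cong) auto
      finally show ?thesis by (simp add: sum_distrib_right)
    qed
    ultimately have "slope_pen lam bhat - slope_pen lam b \<ge> lam r * t"
      using dd_tele[OF rp, of lam] by simp
    with argmin[of b] show ?thesis by (simp add: b_def)
  qed
  have "0 \<le> g bhat \<bullet> h + - lam r"
    by (rule deriv_lemma[OF phi_deriv[OF grad] tau]) (use key in simp)
  then show ?thesis by (simp add: h_def s_def inner_axis algebra_simps)
qed

lemma claimA:
  fixes l :: "real ^ 'n::finite \<Rightarrow> real"
    and g :: "real ^ 'n \<Rightarrow> real ^ 'n"
    and lam :: "nat \<Rightarrow> real"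
    and bhat :: "real ^ 'n"
    and r :: nat
    and s :: real
  assumes grad: "\<And>b. (l has_derivative (\<lambda>h. g b \<bullet> h)) (at b)"
    and lam_mono: "\<And>i j. 1 \<le> i \<Longrightarrow> i \<le> j \<Longrightarrow> j \<le> CARD('n) \<Longrightarrow> lam j \<le> lam i"
    and lam_nonneg: "lam (CARD('n)) \<ge> 0"
    and argmin: "\<And>b. l bhat + slope_pen lam bhat \<le> l b + slope_pen lam b"
    and R: "card {i. bhat $ i \<noteq> 0} = r"
    and r_pos: "r \<ge> 1"
    and z: "bhat $ i = 0"
    and s: "s = 1 \<or> s = -1"
  shows "r < CARD('n)" and "s * (g bhat $ i) + lam (Suc r) \<ge> 0"
proof -
  define p where "p = CARD('n)"
  define S where "S = {i. bhat $ i \<noteq> 0}"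
  have fS: "finite S" by simp
  have SU: "S \<subset> UNIV" using z by (auto simp: S_def)
  have rp: "r < p" unfolding p_def using R psubset_card_mono[OF _ SU] by (simp add: S_def)
  then show "r < CARD('n)" by (simp add: p_def)
  have Sne: "S \<noteq> {}" using R r_pos unfolding S_def by (metis card.empty not_one_le_zero)
  define t0 where "t0 = Min ((\<lambda>j. \<bar>bhat $ j\<bar>) ` S)"
  have t0: "t0 > 0" unfolding t0_def using fS Sne by (auto simp: S_def)
  have t0le: "t0 \<le> \<bar>bhat $ j\<bar>" if "j \<in> S" for j unfolding t0_def using fS that by auto
  have as: "\<bar>s\<bar> = 1" using s by auto
  define h where "h = s *\<^sub>R axis i (1::real)"
  have key: "l bhat \<le> l (bhat + t *\<^sub>R h) + lam (Suc r) * t" if t: "0 < t" "t < t0" for t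
  proof -
    define b where "b = bhat + t *\<^sub>R h"
    have bj: "b $ j = bhat $ j" if "j \<noteq> i" for j using that by (simp add: b_def h_def axis_def)
    have bi: "\<bar>b $ i\<bar> = t" using z t as by (simp add: b_def h_def axis_def abs_mult)
    have ble: "\<bar>b $ j\<bar> \<le> \<bar>bhat $ j\<bar> + (if j = i then t else 0)" for j
      using bj bi by (cases "j = i") auto
    have tb: "topsum b k \<le> topsum bhat k + t" if kp: "k \<le> p" for k
    proof -
      obtain A where A: "card A = k" "topsum b k = (\<Sum>j\<in>A. \<bar>b $ j\<bar>)"
        using topsum_facts(2)[of k b] kp by (auto simp: p_def)
      have "(\<Sum>j\<in>A. \<bar>b $ j\<bar>) \<le> (\<Sum>j\<in>A. \<bar>bhat $ j\<bar> + (if j = i then t else 0))" by (rule sum_mono) (rule ble)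
      also have "\<dots> = (\<Sum>j\<in>A. \<bar>bhat $ j\<bar>) + (if i \<in> A then t else 0)"
        by (simp add: sum.distrib)
      also have "\<dots> \<le> topsum bhat k + t" using topsum_facts(1)[OF A(1), of bhat] t by auto
      finally show ?thesis using A by simp
    qed
    have ta: "topsum b k \<le> topsum bhat k" if kr: "k \<le> r" for k
    proof -
      obtain A where A: "card A = k" "topsum b k = (\<Sum>j\<in>A. \<bar>b $ j\<bar>)"
        using topsum_facts(2)[of k b] kr rp by (auto simp: p_def)
      show ?thesis
      proof (cases "i \<in> A")
        case False
        have "(\<Sum>j\<in>A. \<bar>b $ j\<bar>) = (\<Sum>j\<in>A. \<bar>bhat $ j\<bar>)" using bj False by (intro sum.cong) (auto, metis)
        then show ?thesis using A topsum_facts(1)[OF A(1), of bhat] by simp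
      next
        case True
        have fA: "finite A" by simp
        have "card (A \<inter> S) < card S"
        proof -
          have "A \<inter> S \<subseteq> A - {i}" using z by (auto simp: S_def)
          then have "card (A \<inter> S) \<le> card (A - {i})" by (intro card_mono) auto
          also have "\<dots> = k - 1" using True A(1) by simp
          finally show ?thesis using R kr r_pos True A(1) unfolding S_def
            by (metis card_0_eq diff_less empty_iff fA le_trans less_one not_le)
        qed
        then obtain j where j: "j \<in> S" "j \<notin> A" using card_mono[OF fS, of "A \<inter> S"]
          by (metis Int_lower2 Int_absorb1 less_irrefl subsetI IntI)
        define A' where "A' = insert j (A - {i})"
        have ji: "j \<noteq> i" using j z by (auto simp: S_def)
        have cA': "card A' = k" using A(1) True j unfolding A'_def by (simp add: card_insert_if)
          (metis One_nat_def Suc_pred card_gt_0_iff emptyE fA)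
        have "(\<Sum>j\<in>A. \<bar>b $ j\<bar>) = \<bar>b $ i\<bar> + (\<Sum>j\<in>A - {i}. \<bar>b $ j\<bar>)"
          using True by (simp add: sum.remove)
        also have "(\<Sum>j\<in>A - {i}. \<bar>b $ j\<bar>) = (\<Sum>j\<in>A - {i}. \<bar>bhat $ j\<bar>)"
          using bj by (intro sum.cong) auto
        also have "\<bar>b $ i\<bar> \<le> \<bar>bhat $ j\<bar>" using bi t t0le[OF j(1)] by simp
        then have "\<bar>b $ i\<bar> + (\<Sum>j\<in>A - {i}. \<bar>bhat $ j\<bar>) \<le> (\<Sum>j\<in>A'. \<bar>bhat $ j\<bar>)"
          unfolding A'_def using j by (simp add: sum.insert)
        also have "\<dots> \<le> topsum bhat k" by (rule topsum_facts(1)[OF cA'])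
        finally show ?thesis using A by simp
      qed
    qed
    have dn: "dd lam p k \<ge> 0" if "1 \<le> k" for k
      using dd_nonneg[of p lam k] lam_mono lam_nonneg that by (simp add: p_def)
    have "slope_pen lam b - slope_pen lam bhat = (\<Sum>k=1..p. dd lam p k * (topsum b k - topsum bhat k))"
      unfolding pen_repr p_def by (simp add: sum_subtractf[symmetric] algebra_simps)
    also have "\<dots> \<le> (\<Sum>k=1..p. dd lam p k * (if r < k then t else 0))"
      using ta tb dn by (intro sum_mono mult_left_mono) (auto simp: algebra_simps)
    also have "(\<Sum>k=1..p. dd lam p k * (if r < k then t else 0)) = (\<Sum>k=Suc r..p. dd lam p k) * t"
    proof -
      have "(\<Sum>k=1..p. dd lam p k * (if r < k then t else 0)) = (\<Sum>k=1..r. dd lam p k * (if r < k then t else 0)) + (\<Sum>k=Suc r..p. dd lam p k * (if r < k then t else 0))"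
        using rp by (intro split_ivl) simp
      also have "(\<Sum>k=1..r. dd lam p k * (if r < k then t else 0)) = 0"
        by (intro sum.neutral) auto
      also have "(\<Sum>k=Suc r..p. dd lam p k * (if r < k then t else 0)) = (\<Sum>k=Suc r..p. dd lam p k * t)"
        by (intro sum.cong) auto
      finally show ?thesis by (simp add: sum_distrib_right)
    qed
    also have "\<dots> = lam (Suc r) * t" using dd_tele[of "Suc r" p lam] rp by simp
    finally have "slope_pen lam b - slope_pen lam bhat \<le> lam (Suc r) * t" .
    with argmin[of b] show ?thesis by (simp add: b_def)
  qed
  have "0 \<le> g bhat \<bullet> h + lam (Suc r)"
    by (rule deriv_lemma[OF phi_deriv[OF grad] t0]) (use key in simp)
  then show "s * (g bhat $ i) + lam (Suc r) \<ge> 0" by (simp add: h_def inner_axis algebra_simps)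
qed

theorem theorem3:
  fixes l :: "real ^ 'n \<Rightarrow> real"
    and g :: "real ^ 'n \<Rightarrow> real ^ 'n"
    and lam :: "nat \<Rightarrow> real"
    and bhat :: "real ^ 'n"
    and r :: nat
  assumes convex: "convex_on UNIV l"
    and grad: "\<And>b. (l has_derivative (\<lambda>h. g b \<bullet> h)) (at b)"
    and lam_mono: "\<And>i j. 1 \<le> i \<Longrightarrow> i \<le> j \<Longrightarrow> j \<le> CARD('n) \<Longrightarrow> lam j \<le> lam i"
    and lam_nonneg: "lam (CARD('n)) \<ge> 0"
    and argmin: "\<And>b. l bhat + slope_pen lam bhat \<le> l b + slope_pen lam b"
    and R: "card {i. bhat $ i \<noteq> 0} = r"
    and r_pos: "r \<ge> 1"
  shows "(\<forall>a>0. \<forall>i. (bhat $ i \<noteq> 0 \<longleftrightarrow> \<bar>(- g bhat + a *\<^sub>R bhat) $ i\<bar> > lam r)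
                      \<and> (bhat $ i \<noteq> 0 \<longrightarrow> \<bar>(- g bhat) $ i\<bar> \<ge> lam r))
       \<and> ((\<forall>i j. 1 \<le> i \<longrightarrow> i < j \<longrightarrow> j \<le> CARD('n) \<longrightarrow> lam j < lam i)
            \<longrightarrow> (\<forall>i. \<bar>(- g bhat) $ i\<bar> \<ge> lam r \<longrightarrow> bhat $ i \<noteq> 0))"
proof -
  have zero: "\<bar>g bhat $ i\<bar> \<le> lam (Suc r) \<and> r < CARD('n)" if z: "bhat $ i = 0" for i
  proof -
    have SU: "{i. bhat $ i \<noteq> 0} \<subset> UNIV" using z by auto
    have "r < CARD('n)" using R psubset_card_mono[OF _ SU] by simp
    moreover have "1 * (g bhat $ i) + lam (Suc r) \<ge> 0"
      using grad lam_mono lam_nonneg argmin R r_pos z by (rule claimA(2)) simp_all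
    moreover have "(-1) * (g bhat $ i) + lam (Suc r) \<ge> 0"
      using grad lam_mono lam_nonneg argmin R r_pos z by (rule claimA(2)) simp_all
    ultimately show ?thesis by (auto simp: abs_if)
  qed
  have nzB: "lam r \<le> \<bar>(- g bhat) $ i\<bar> \<and> (\<forall>a>0. lam r < \<bar>(- g bhat + a *\<^sub>R bhat) $ i\<bar>)"
    if nz: "bhat $ i \<noteq> 0" for i
  proof -
    define s where "s = sgn (bhat $ i)"
    have Bi: "s * (- (g bhat $ i)) \<ge> lam r" using grad lam_mono lam_nonneg argmin R r_pos nz unfolding s_def by (rule claimB)
    have as: "\<bar>s\<bar> = 1" using nz by (simp add: s_def)
    have "s * (- (g bhat $ i)) \<le> \<bar>(- g bhat) $ i\<bar>" using as by (simp add: abs_mult[symmetric] abs_le_iff)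
      (metis abs_ge_self abs_minus_cancel abs_mult mult.left_neutral)
    moreover have "lam r < \<bar>(- g bhat + a *\<^sub>R bhat) $ i\<bar>" if a: "a > 0" for a
    proof -
      have sb: "s * bhat $ i = \<bar>bhat $ i\<bar>" by (simp add: s_def sgn_if)
      have "s * ((- g bhat + a *\<^sub>R bhat) $ i) = s * (- (g bhat $ i)) + a * \<bar>bhat $ i\<bar>"
        using sb by (simp add: algebra_simps)
      moreover have "s * ((- g bhat + a *\<^sub>R bhat) $ i) \<le> \<bar>(- g bhat + a *\<^sub>R bhat) $ i\<bar>"
        using as by (metis abs_ge_self abs_mult mult.left_neutral)
      moreover have "a * \<bar>bhat $ i\<bar> > 0" using a nz by simp
      ultimately show ?thesis using Bi by linarith
    qed
    ultimately show ?thesis using Bi by auto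
  qed
  have lrr: "lam (Suc r) \<le> lam r" if "r < CARD('n)" using lam_mono[of r "Suc r"] r_pos that by simp
  show ?thesis
  proof (intro conjI allI impI)
    fix a :: real and i assume a: "a > 0"
    show "(bhat $ i \<noteq> 0) = (lam r < \<bar>(- g bhat + a *\<^sub>R bhat) $ i\<bar>)"
    proof
      assume "bhat $ i \<noteq> 0" then show "lam r < \<bar>(- g bhat + a *\<^sub>R bhat) $ i\<bar>" using nzB a by blast
    next
      assume h: "lam r < \<bar>(- g bhat + a *\<^sub>R bhat) $ i\<bar>"
      show "bhat $ i \<noteq> 0"
      proof
        assume z: "bhat $ i = 0"
        then show False using zero[OF z] lrr h by simp
      qed
    qed
    show "bhat $ i \<noteq> 0 \<Longrightarrow> lam r \<le> \<bar>(- g bhat) $ i\<bar>" using nzB by blast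
  next
    fix i
    assume st: "\<forall>i j. 1 \<le> i \<longrightarrow> i < j \<longrightarrow> j \<le> CARD('n) \<longrightarrow> lam j < lam i"
      and h: "lam r \<le> \<bar>(- g bhat) $ i\<bar>"
    show "bhat $ i \<noteq> 0"
    proof
      assume z: "bhat $ i = 0"
      then have "lam (Suc r) < lam r" using zero[OF z] st r_pos by auto
      then show False using zero[OF z] h by simp
    qed
  qed
qed

end
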